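(* Fix a real $\alpha>4$. Let $A$ be the event that there exists a line $\ell$ of $Q$ not containing $x$ with $|\ell\cap U|\ge\lceil\log s\rceil$. Then $\mathbb{P}(A)\to 0$ as $s\to\infty$, uniformly over all locally sparse generalized quadrangles $Q$ of order $(s,t)$ with $t\ge s(\log s)^{2\alpha}$ and all points $x$ of $Q$.
   Context: A generalized quadrangle of order $(s,t)$ (with $s,t\ge 2$) is a point-line incidence structure in which every point lies on $t+1$ lines, every line contains $s+1$ points, two distinct points lie on at most one common line, and for every point $x$ and line $\ell$ with $x\notin\ell$ there is a unique point $x'\in\ell$ and a unique line $\ell'$ with $x,x'\in\ell'$. The quadrangle is locally sparse if for every set of three points, the number of points collinear with all three is at most $s+1$. Let $\mathcal{P}$ be the point set. For a point $u$, $u^{\perp}$ is the set of points collinear with $u$ (including $u$). For $R\subseteq\mathcal{P}$, $R^{\bowtie}=\bigcup_{y\in R}y^{\perp}$. Logarithms are natural. Random construction: fix $\alpha>4$ and a point $x$. Define $p$ by $ps=(s\log t-\alpha s\log\log s)/t$. Independently for each of the $t+1$ lines $\ell$ through $x$, with probability $ps$ the line is chosen, and on each chosen line one point of $\ell\setminus\{x\}$ is selected uniformly at random (independently). Let $S$ be the set of selected points and $U=\mathcal{P}\setminus(S\cup\{x\})^{\bowtie}$. *)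

theory Defs
  imports "HOL-Probability.Probability"
begin

text \<open>A point-line incidence structure is given by a point set P and a set L of
lines, each line being represented by its set of points (for s \<ge> 1 distinct lines of
a generalized quadrangle have distinct point sets, so this loses no generality).\<close>

definition gen_quadrangle :: "'a set \<Rightarrow> 'a set set \<Rightarrow> nat \<Rightarrow> nat \<Rightarrow> bool" where
  "gen_quadrangle P L s t \<longleftrightarrow>
     s \<ge> 2 \<and> t \<ge> 2 \<and>
     (\<forall>l\<in>L. l \<subseteq> P) \<and>
     (\<forall>l\<in>L. card l = s + 1) \<and>
     (\<forall>x\<in>P. card {l\<in>L. x \<in> l} = t + 1) \<and>
     (\<forall>x\<in>P. \<forall>y\<in>P. x \<noteq> y \<longrightarrow> card {l\<in>L. x \<in> l \<and> y \<in> l} \<le> 1) \<and>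
     (\<forall>x\<in>P. \<forall>l\<in>L. x \<notin> l \<longrightarrow>
        (\<exists>!pl. fst pl \<in> l \<and> snd pl \<in> L \<and> x \<in> snd pl \<and> fst pl \<in> snd pl))"

definition perp :: "'a set \<Rightarrow> 'a set set \<Rightarrow> 'a \<Rightarrow> 'a set" where
  "perp P L u = {y\<in>P. y = u \<or> (\<exists>l\<in>L. u \<in> l \<and> y \<in> l)}"

definition bowtie :: "'a set \<Rightarrow> 'a set set \<Rightarrow> 'a set \<Rightarrow> 'a set" where
  "bowtie P L R = (\<Union>y\<in>R. perp P L y)"

definition locally_sparse :: "'a set \<Rightarrow> 'a set set \<Rightarrow> nat \<Rightarrow> bool" where
  "locally_sparse P L s \<longleftrightarrow>
     (\<forall>a\<in>P. \<forall>b\<in>P. \<forall>c\<in>P. a \<noteq> b \<and> a \<noteq> c \<and> b \<noteq> c \<longrightarrow>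
        card (perp P L a \<inter> perp P L b \<inter> perp P L c) \<le> s + 1)"

definition ps_param :: "real \<Rightarrow> nat \<Rightarrow> nat \<Rightarrow> real" where
  "ps_param \<alpha> s t = (real s * ln (real t) - \<alpha> * real s * ln (ln (real s))) / real t"

definition lines_through :: "'a set set \<Rightarrow> 'a \<Rightarrow> 'a set set" where
  "lines_through L x = {l\<in>L. x \<in> l}"

definition selection :: "real \<Rightarrow> nat \<Rightarrow> nat \<Rightarrow> 'a set set \<Rightarrow> 'a \<Rightarrow> ('a set \<Rightarrow> 'a option) pmf" where
  "selection \<alpha> s t L x =
     Pi_pmf (lines_through L x) None
       (\<lambda>l. do { b \<leftarrow> bernoulli_pmf (ps_param \<alpha> s t);
                 if b then map_pmf Some (pmf_of_set (l - {x})) else return_pmf None })"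

definition selected_set :: "'a set set \<Rightarrow> 'a \<Rightarrow> ('a set \<Rightarrow> 'a option) \<Rightarrow> 'a set" where
  "selected_set L x f = {p. \<exists>l\<in>lines_through L x. f l = Some p}"

definition uncovered :: "'a set \<Rightarrow> 'a set set \<Rightarrow> 'a \<Rightarrow> ('a set \<Rightarrow> 'a option) \<Rightarrow> 'a set" where
  "uncovered P L x f = P - bowtie P L (selected_set L x f \<union> {x})"

definition event_A :: "'a set \<Rightarrow> 'a set set \<Rightarrow> nat \<Rightarrow> 'a \<Rightarrow> ('a set \<Rightarrow> 'a option) set" where
  "event_A P L s x = {f. \<exists>l\<in>L. x \<notin> l \<and>
      int (card (l \<inter> uncovered P L x f)) \<ge> \<lceil>ln (real s)\<rceil>}"

end

theory Submission
  imports Defs "HOL-Real_Asymp.Real_Asymp"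
begin


lemma analytic_ineq:
  fixes \<alpha> s t kr :: real
  assumes a: "\<alpha> > 4" and y6: "ln s \<ge> 6" and s0: "s > 0"
    and lt: "ln t \<ge> ln s + 2 * \<alpha> * ln (ln s)"
    and k1: "ln s \<le> kr" and k2: "kr \<le> ln s + 1"
  shows "ln 18 + 2 * ln s + 3 * ln t + kr * ln (s+1) - kr * ln t + \<alpha> * kr * ln (ln s)
     \<le> ln 18 + 5 * ln s + (ln s + 1) / s - 4 * (ln s - 6) * ln (ln s)"
proof -
  define y where "y = ln s"
  define L2 where "L2 = ln y"
  have L2: "L2 \<ge> 0" unfolding L2_def y_def using y6 by simp
  have k3: "kr - 3 \<ge> 0" using k1 y6 by simp
  have A: "(kr - 3) * ln t \<ge> (kr - 3) * (y + 2 * \<alpha> * L2)"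
    using mult_left_mono[OF lt k3] unfolding y_def L2_def by simp
  have ls1: "ln (s+1) \<le> y + 1/s"
  proof -
    have "s+1 = s*(1+1/s)" using s0 by (simp add: field_simps)
    moreover have "ln (s*(1+1/s)) = ln s + ln (1 + 1/s)" using s0 by (intro ln_mult_pos) (auto simp: add_pos_pos)
    ultimately have "ln (s+1) = ln s + ln (1 + 1/s)" by simp
    also have "ln (1 + 1/s) \<le> 1/s" using s0 by (intro ln_add_one_self_le_self) simp
    finally show ?thesis unfolding y_def by simp
  qed
  have B: "kr * ln (s+1) \<le> kr * y + kr / s"
    using mult_left_mono[OF ls1, of kr] k3 by (simp add: algebra_simps)
  have C: "kr / s \<le> (y+1)/s" using k2 s0 unfolding y_def by (simp add: divide_right_mono)
  have D: "(\<alpha> - 4) * L2 * (6 - y) \<le> 0"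
    using a L2 y6 unfolding y_def by (intro mult_nonneg_nonpos) auto
  have E: "\<alpha> * L2 * (6 - kr) \<le> \<alpha> * L2 * (6 - y)"
    using a L2 k1 unfolding y_def by (intro mult_left_mono) auto
  show ?thesis using A B C D E unfolding y_def[symmetric] L2_def[symmetric]
    by (simp add: algebra_simps)
qed


lemma h_lim: "filterlim (\<lambda>s::real. ln 18 + 5 * ln s + (ln s + 1) / s - 4 * (ln s - 6) * ln (ln s)) at_bot at_top"
  by real_asymp



lemma factor_prob:
  fixes q :: real
  assumes M: "finite M" "M \<noteq> {}" and B: "B \<subseteq> M" and q: "0 \<le> q" "q \<le> 1"
  shows "measure_pmf.prob (bernoulli_pmf q \<bind> (\<lambda>b. if b then map_pmf Some (pmf_of_set M) else return_pmf None)) (- (Some ` B)) = 1 - q * card B / card M"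
proof -
  define D where "D = bernoulli_pmf q \<bind> (\<lambda>b. if b then map_pmf Some (pmf_of_set M) else return_pmf None)"
  have fB: "finite B" using M B finite_subset by blast
  have pw: "pmf D (Some w) = q / card M" if w: "w \<in> M" for w
  proof -
    have "pmf D (Some w) = (\<integral>b. pmf (if b then map_pmf Some (pmf_of_set M) else return_pmf None) (Some w) \<partial>bernoulli_pmf q)"
      unfolding D_def by (rule pmf_bind)
    also have "\<dots> = pmf (map_pmf Some (pmf_of_set M)) (Some w) * q"
      using q by simp
    also have "pmf (map_pmf Some (pmf_of_set M)) (Some w) = pmf (pmf_of_set M) w"
      by (rule pmf_map_inj') (simp add: inj_def)
    also have "\<dots> = 1 / card M" using M w by simp
    finally show ?thesis by simp
  qed
  have "measure_pmf.prob D (Some ` B) = (\<Sum>y\<in>Some ` B. pmf D y)"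
    using fB by (intro measure_measure_pmf_finite) auto
  also have "\<dots> = (\<Sum>w\<in>B. pmf D (Some w))"
    by (subst sum.reindex) (auto simp: inj_on_def)
  also have "\<dots> = (\<Sum>w\<in>B. q / card M)" using pw B by (intro sum.cong) auto
  also have "\<dots> = q * card B / card M" by simp
  finally have e: "measure_pmf.prob D (Some ` B) = q * card B / card M" .
  have "measure_pmf.prob D (- (Some ` B)) = 1 - measure_pmf.prob D (Some ` B)"
    using measure_pmf.prob_compl[of "Some ` B" D] by (simp add: Compl_eq_Diff_UNIV)
  then show ?thesis using e unfolding D_def by simp
qed


context
  fixes P :: "'a set" and L :: "'a set set" and s t :: nat
  assumes gq: "gen_quadrangle P L s t"
begin

lemma gq_st: "s \<ge> 2" "t \<ge> 2"
  using gq unfolding gen_quadrangle_def by auto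

lemma line_sub: "l \<in> L \<Longrightarrow> l \<subseteq> P"
  using gq unfolding gen_quadrangle_def by auto

lemma line_card: "l \<in> L \<Longrightarrow> card l = s + 1"
  using gq unfolding gen_quadrangle_def by auto

lemma line_fin: "l \<in> L \<Longrightarrow> finite l"
  using line_card by (metis add_eq_0_iff_both_eq_0 card.infinite one_neq_zero)

lemma lt_card: "y \<in> P \<Longrightarrow> card (lines_through L y) = t + 1"
  using gq unfolding gen_quadrangle_def lines_through_def by auto

lemma lt_fin: "y \<in> P \<Longrightarrow> finite (lines_through L y)"
  using lt_card by (metis add_eq_0_iff_both_eq_0 card.infinite one_neq_zero)

lemma two_pts:
  assumes "y \<in> P" "z \<in> P" "y \<noteq> z" "l \<in> L" "l' \<in> L" "y \<in> l" "z \<in> l" "y \<in> l'" "z \<in> l'"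
  shows "l = l'"
proof -
  have c: "card {l\<in>L. y \<in> l \<and> z \<in> l} \<le> 1"
    using gq assms(1-3) unfolding gen_quadrangle_def by auto
  have "finite {l\<in>L. y \<in> l \<and> z \<in> l}"
    using lt_fin[OF assms(1)] by (rule finite_subset[rotated]) (auto simp: lines_through_def)
  show ?thesis
  proof (rule ccontr)
    assume "l \<noteq> l'"
    then have "card {l, l'} \<le> card {l\<in>L. y \<in> l \<and> z \<in> l}"
      using assms \<open>finite _\<close> by (intro card_mono) auto
    with c \<open>l \<noteq> l'\<close> show False by simp
  qed
qed

lemma proj_ex:
  assumes "y \<in> P" "l \<in> L" "y \<notin> l"
  obtains w n where "w \<in> l" "n \<in> L" "y \<in> n" "w \<in> n"
proof -
  have "\<exists>!pl. fst pl \<in> l \<and> snd pl \<in> L \<and> y \<in> snd pl \<and> fst pl \<in> snd pl"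
    using gq assms unfolding gen_quadrangle_def by auto
  then show ?thesis using that by auto
qed

lemma proj_uniq:
  assumes "y \<in> P" "l \<in> L" "y \<notin> l"
    and "w \<in> l" "n \<in> L" "y \<in> n" "w \<in> n"
    and "w' \<in> l" "n' \<in> L" "y \<in> n'" "w' \<in> n'"
  shows "w = w'"
proof -
  have "\<exists>!pl. fst pl \<in> l \<and> snd pl \<in> L \<and> y \<in> snd pl \<and> fst pl \<in> snd pl"
    using gq assms unfolding gen_quadrangle_def by auto
  then have "(w, n) = (w', n')" using assms by (metis fst_conv snd_conv)
  then show ?thesis by simp
qed

lemma perp_I: "n \<in> L \<Longrightarrow> w \<in> n \<Longrightarrow> y \<in> n \<Longrightarrow> y \<in> perp P L w"
  using line_sub unfolding perp_def by auto

lemma perp_sub: "perp P L y \<subseteq> insert y (\<Union>(lines_through L y))"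
  unfolding perp_def lines_through_def by auto

lemma perp_card: assumes "y \<in> P"
  shows "finite (perp P L y) \<and> card (perp P L y) \<le> 1 + (t+1)*(s+1)"
proof -
  have f: "finite (\<Union>(lines_through L y))"
    using lt_fin[OF assms] line_fin by (auto simp: lines_through_def)
  have "card (\<Union>(lines_through L y)) \<le> (\<Sum>l\<in>lines_through L y. card l)"
    by (rule card_Union_le_sum_card)
  also have "\<dots> = (t+1)*(s+1)"
    using lt_card[OF assms] line_card by (simp add: lines_through_def)
  finally have c: "card (\<Union>(lines_through L y)) \<le> (t+1)*(s+1)" .
  have "card (perp P L y) \<le> card (insert y (\<Union>(lines_through L y)))"
    using perp_sub f by (intro card_mono) auto
  also have "\<dots> \<le> 1 + card (\<Union>(lines_through L y))" by (simp add: card_insert_le_m1 card_insert_if)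
  finally show ?thesis using c f perp_sub finite_subset by fastforce
qed

lemma lt_ne: "y \<in> P \<Longrightarrow> lines_through L y \<noteq> {}"
  using lt_card by fastforce

lemma P_sub: assumes "x \<in> P" shows "P \<subseteq> (\<Union>y\<in>perp P L x. perp P L y)"
proof
  fix z assume z: "z \<in> P"
  obtain m where m: "m \<in> L" "x \<in> m" using lt_ne[OF assms] unfolding lines_through_def by auto
  show "z \<in> (\<Union>y\<in>perp P L x. perp P L y)"
  proof (cases "z \<in> m")
    case True
    then have "z \<in> perp P L x" using perp_I[OF m(1) m(2)] by simp
    moreover have "z \<in> perp P L z" using z unfolding perp_def by simp
    ultimately show ?thesis by blast
  next
    case False
    obtain w n where wn: "w \<in> m" "n \<in> L" "z \<in> n" "w \<in> n" using proj_ex[OF z m(1) False] by blast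
    have "w \<in> perp P L x" using perp_I[OF m(1) m(2) wn(1)] .
    moreover have "z \<in> perp P L w" using perp_I[OF wn(2) wn(4) wn(3)] .
    ultimately show ?thesis by blast
  qed
qed

lemma P_card: assumes "x \<in> P"
  shows "finite P \<and> card P \<le> (1 + (t+1)*(s+1))^2"
proof -
  define c where "c = 1 + (t+1)*(s+1)"
  have pc: "\<And>y. y \<in> P \<Longrightarrow> finite (perp P L y) \<and> card (perp P L y) \<le> c"
    using perp_card c_def by blast
  have px: "perp P L x \<subseteq> P" unfolding perp_def by auto
  have fin: "finite (\<Union>y\<in>perp P L x. perp P L y)"
    using pc[OF assms] pc px by auto
  have "card (\<Union>y\<in>perp P L x. perp P L y) \<le> (\<Sum>y\<in>perp P L x. card (perp P L y))"
    by (rule card_UN_le) (use pc[OF assms] in auto)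
  also have "\<dots> \<le> card (perp P L x) * c"
    using sum_bounded_above[of "perp P L x" "\<lambda>y. card (perp P L y)" c] pc px by auto
  also have "\<dots> \<le> c * c" using pc[OF assms] by simp
  finally have "card (\<Union>y\<in>perp P L x. perp P L y) \<le> c^2" by (simp add: power2_eq_square)
  moreover have "card P \<le> card (\<Union>y\<in>perp P L x. perp P L y)"
    using P_sub[OF assms] fin by (rule card_mono[rotated])
  ultimately show ?thesis using P_sub[OF assms] fin finite_subset c_def by fastforce
qed

lemma L_card: assumes "x \<in> P"
  shows "finite L \<and> card L \<le> card P * (t+1)"
proof -
  have sub: "L \<subseteq> (\<Union>y\<in>P. lines_through L y)"
  proof
    fix l assume l: "l \<in> L"
    then have "l \<noteq> {}" using line_card by fastforce
    then obtain y where "y \<in> l" by blast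
    then show "l \<in> (\<Union>y\<in>P. lines_through L y)" using l line_sub unfolding lines_through_def by blast
  qed
  have fP: "finite P" using P_card[OF assms] by simp
  have fin: "finite (\<Union>y\<in>P. lines_through L y)" using fP lt_fin by auto
  have "card L \<le> card (\<Union>y\<in>P. lines_through L y)" using sub fin by (rule card_mono[rotated])
  also have "\<dots> \<le> (\<Sum>y\<in>P. card (lines_through L y))" by (rule card_UN_le[OF fP])
  also have "\<dots> = card P * (t+1)" using lt_card by simp
  finally show ?thesis using sub fin finite_subset by blast
qed

lemma L_card_real: assumes "x \<in> P"
  shows "finite L \<and> real (card L) \<le> 18 * real s ^ 2 * real t ^ 3"
proof -
  have s2: "s \<ge> 2" and t2: "t \<ge> 2" using gq_st by auto
  have a: "1 + (t+1)*(s+1) \<le> 3 * (s * t)"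
  proof -
    have h1: "2 * s \<le> s * t" using t2 by simp
    have h2: "2 * t \<le> s * t" using s2 by simp
    have e: "1 + (t+1)*(s+1) = s * t + s + t + 2" by (simp add: algebra_simps)
    show ?thesis unfolding e using h1 h2 s2 t2 by linarith
  qed
  have "card L \<le> (1 + (t+1)*(s+1))^2 * (t+1)"
    using L_card[OF assms] P_card[OF assms] by (meson le_trans mult_le_mono1)
  also have "\<dots> \<le> (3 * (s * t))^2 * (2*t)"
    using a t2 by (intro mult_le_mono power_mono) auto
  also have "\<dots> = 18 * s^2 * t^3" by (simp add: power2_eq_square power3_eq_cube algebra_simps)
  finally have "card L \<le> 18 * s^2 * t^3" .
  then have "real (card L) \<le> real (18 * s^2 * t^3)" by linarith
  then show ?thesis using L_card[OF assms] by simp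
qed

lemma prob_bound:
  fixes \<alpha> :: real and x and k :: nat
  assumes xP: "x \<in> P" and q0: "0 \<le> ps_param \<alpha> s t" and q1: "ps_param \<alpha> s t \<le> 1"
    and k: "k = nat \<lceil>ln (real s)\<rceil>"
  shows "measure_pmf.prob (selection \<alpha> s t L x) (event_A P L s x)
          \<le> real (card L * ((s+1) choose k)) * exp (- (ps_param \<alpha> s t / s) * (real k * real t))"
proof -
  define q where "q = ps_param \<alpha> s t"
  define Lx where "Lx = lines_through L x"
  define Bs where "Bs T m = {w \<in> m - {x}. \<exists>y\<in>T. y \<in> perp P L w}" for T m
  define I where "I = {(l,T). l \<in> L \<and> x \<notin> l \<and> T \<subseteq> l - perp P L x \<and> card T = k}"
  define E where "E T = Pi Lx (\<lambda>m. - (Some ` Bs T m))" for T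
  define D where "D m = bernoulli_pmf q \<bind> (\<lambda>b. if b then map_pmf Some (pmf_of_set (m - {x})) else return_pmf None)" for m :: "'a set"
  have sel: "selection \<alpha> s t L x = Pi_pmf Lx None D"
    unfolding selection_def D_def q_def Lx_def by simp
  have s2: "s \<ge> 2" and t2: "t \<ge> 2" using gq_st by auto
  have fLx: "finite Lx" and cLx: "card Lx = t + 1" using lt_fin[OF xP] lt_card[OF xP] Lx_def by auto
  have LxL: "\<And>m. m \<in> Lx \<Longrightarrow> m \<in> L \<and> x \<in> m" unfolding Lx_def lines_through_def by auto
  have fL: "finite L" using L_card[OF xP] by simp

  have step1: "event_A P L s x \<subseteq> (\<Union>i\<in>I. E (snd i))"
  proof
    fix f assume "f \<in> event_A P L s x"
    then obtain l where l: "l \<in> L" "x \<notin> l" and c: "int (card (l \<inter> uncovered P L x f)) \<ge> \<lceil>ln (real s)\<rceil>"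
      unfolding event_A_def by blast
    have "k \<le> card (l \<inter> uncovered P L x f)" using c k by linarith
    then obtain T where T: "T \<subseteq> l \<inter> uncovered P L x f" "card T = k" by (metis obtain_subset_with_card_n)
    have U: "uncovered P L x f \<inter> perp P L x = {}"
      unfolding uncovered_def bowtie_def by auto
    have "(l,T) \<in> I" using T l U unfolding I_def by auto
    moreover have "f \<in> E T"
      unfolding E_def
    proof (rule Pi_I)
      fix m assume m: "m \<in> Lx"
      show "f m \<in> - Some ` Bs T m"
      proof
        assume "f m \<in> Some ` Bs T m"
        then obtain w where w: "f m = Some w" "w \<in> Bs T m" by auto
        then obtain y where y: "y \<in> T" "y \<in> perp P L w" unfolding Bs_def by auto
        have "w \<in> selected_set L x f" using m w unfolding selected_set_def Lx_def by auto
        then have "y \<notin> uncovered P L x f" using y unfolding uncovered_def bowtie_def by auto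
        then show False using T y by auto
      qed
    qed
    ultimately show "f \<in> (\<Union>i\<in>I. E (snd i))" by force
  qed

  have step2: "measure_pmf.prob (Pi_pmf Lx None D) (E T) \<le> exp (- (q / s) * (real k * real t))"
    if lT: "(l,T) \<in> I" for l T
  proof -
    have l: "l \<in> L" "x \<notin> l" and T: "T \<subseteq> l - perp P L x" "card T = k" using lT unfolding I_def by auto
    have Mprops: "finite (m - {x}) \<and> m - {x} \<noteq> {} \<and> Bs T m \<subseteq> m - {x} \<and> card (m - {x}) = s" if m: "m \<in> Lx" for m
    proof -
      have c: "card (m - {x}) = s" using LxL[OF m] line_card by simp
      then have "m - {x} \<noteq> {}" using s2 by (metis card.empty not_numeral_le_zero)
      then show ?thesis using c LxL[OF m] line_fin unfolding Bs_def by auto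
    qed
    have "measure_pmf.prob (Pi_pmf Lx None D) (E T) = (\<Prod>m\<in>Lx. measure_pmf.prob (D m) (- (Some ` Bs T m)))"
      unfolding E_def by (rule measure_Pi_pmf_Pi[OF fLx])
    also have "\<dots> = (\<Prod>m\<in>Lx. 1 - q * card (Bs T m) / s)"
    proof (rule prod.cong[OF refl])
      fix m assume m: "m \<in> Lx"
      show "measure_pmf.prob (D m) (- (Some ` Bs T m)) = 1 - q * card (Bs T m) / s"
        unfolding D_def using factor_prob[of "m - {x}" "Bs T m" q] Mprops[OF m] q0 q1 q_def by simp
    qed
    also have "\<dots> \<le> (\<Prod>m\<in>Lx. exp (- (q / s) * card (Bs T m)))"
    proof (rule prod_mono)
      fix m assume m: "m \<in> Lx"
      have "card (Bs T m) \<le> s" using Mprops[OF m] card_mono by metis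
      then have "q * real (card (Bs T m)) \<le> 1 * real s" using q0 q1 q_def by (intro mult_mono) auto
      then have "0 \<le> 1 - q * card (Bs T m) / s" using s2 by (simp add: field_simps)
      moreover have "1 - q * card (Bs T m) / s \<le> exp (- (q / s) * card (Bs T m))"
        using exp_ge_add_one_self[of "- (q / s) * card (Bs T m)"] by simp
      ultimately show "0 \<le> 1 - q * card (Bs T m) / s \<and> 1 - q * card (Bs T m) / s \<le> exp (- (q / s) * card (Bs T m))" by simp
    qed
    also have "\<dots> = exp (- (q / s) * (\<Sum>m\<in>Lx. real (card (Bs T m))))"
    proof -
      have "- (q / s) * (\<Sum>m\<in>Lx. real (card (Bs T m))) = (\<Sum>m\<in>Lx. - (q / s) * card (Bs T m))"
        by (simp add: sum_distrib_left)
      then show ?thesis using exp_sum[OF fLx, of "\<lambda>m. - (q / s) * card (Bs T m)"] by simp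
    qed
    also have "\<dots> \<le> exp (- (q / s) * (real k * real t))"
    proof -
      obtain x' n0 where x': "x' \<in> l" "n0 \<in> L" "x \<in> n0" "x' \<in> n0" using proj_ex[OF xP l] by blast
      have x'P: "x' \<in> P" using x' l line_sub by auto
      have xx': "x \<noteq> x'" using x' l by auto
      define M0 where "M0 = {m\<in>Lx. x' \<in> m}"
      have M0sub: "M0 \<subseteq> Lx" unfolding M0_def by auto
      have cM0: "card M0 \<le> 1"
      proof -
        have "\<forall>a\<in>M0. \<forall>b\<in>M0. a = b"
          using two_pts[OF xP x'P xx'] LxL unfolding M0_def by blast
        then show ?thesis using card_le_Suc0_iff_eq[of M0] fLx M0sub finite_subset by fastforce
      qed
      have big: "k \<le> card (Bs T m)" if m: "m \<in> Lx - M0" for m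
      proof -
        have mL: "m \<in> L" "x \<in> m" and x'm: "x' \<notin> m" using m LxL unfolding M0_def by auto
        have yP: "y \<in> P" and ym: "y \<notin> m" if "y \<in> T" for y
        proof -
          show "y \<in> P" using that T l line_sub by auto
          show "y \<notin> m"
          proof
            assume "y \<in> m"
            then have "y \<in> perp P L x" using perp_I[OF mL(1) mL(2)] by simp
            then show False using T that by auto
          qed
        qed
        define f where "f y = (SOME w. w \<in> m \<and> (\<exists>n\<in>L. y \<in> n \<and> w \<in> n))" for y
        have fprop: "f y \<in> m \<and> (\<exists>n\<in>L. y \<in> n \<and> f y \<in> n)" if y: "y \<in> T" for y
        proof -
          obtain w n where "w \<in> m" "n \<in> L" "y \<in> n" "w \<in> n" using proj_ex[OF yP[OF y] mL(1) ym[OF y]] by blast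
          then have "\<exists>w. w \<in> m \<and> (\<exists>n\<in>L. y \<in> n \<and> w \<in> n)" by blast
          then show ?thesis unfolding f_def by (rule someI_ex)
        qed
        have img: "f ` T \<subseteq> Bs T m"
        proof
          fix w assume "w \<in> f ` T"
          then obtain y where y: "y \<in> T" "w = f y" by auto
          obtain n where n: "n \<in> L" "y \<in> n" "w \<in> n" using fprop[OF y(1)] y(2) by auto
          have "w \<noteq> x"
          proof
            assume "w = x"
            then have "y \<in> perp P L x" using perp_I[OF n(1) n(3) n(2)] by simp
            then show False using T y by auto
          qed
          moreover have "y \<in> perp P L w" using perp_I[OF n(1) n(3) n(2)] .
          ultimately show "w \<in> Bs T m" unfolding Bs_def using fprop[OF y(1)] y by auto
        qed
        have inj: "inj_on f T"
        proof (rule inj_onI)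
          fix y z assume y: "y \<in> T" and z: "z \<in> T" and e: "f y = f z"
          show "y = z"
          proof (rule ccontr)
            assume yz: "y \<noteq> z"
            define w where "w = f y"
            obtain ny where ny: "ny \<in> L" "y \<in> ny" "w \<in> ny" using fprop[OF y] w_def by auto
            obtain nz where nz: "nz \<in> L" "z \<in> nz" "w \<in> nz" using fprop[OF z] w_def e by auto
            have wm: "w \<in> m" using fprop[OF y] w_def by auto
            show False
            proof (cases "w \<in> l")
              case True
              have "w = x'" using proj_uniq[OF xP l True mL(1) mL(2) wm x'(1) x'(2) x'(3) x'(4)] .
              then show False using wm x'm by simp
            next
              case False
              have wP: "w \<in> P" using wm mL line_sub by auto
              have "y \<in> l" "z \<in> l" using y z T by auto
              then have "y = z" using proj_uniq[OF wP l(1) False _ ny(1) ny(3) ny(2) _ nz(1) nz(3) nz(2)] by blast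
              then show False using yz by simp
            qed
          qed
        qed
        have "finite (Bs T m)" using Mprops[of m] m finite_subset by blast
        then have "card T \<le> card (Bs T m)" using card_inj_on_le[OF inj img] by blast
        then show ?thesis using T by simp
      qed
      have "real k * real t \<le> real k * real (card (Lx - M0))"
      proof -
        have "card (Lx - M0) = card Lx - card M0" using card_Diff_subset[OF finite_subset[OF M0sub fLx] M0sub] .
        then have "t \<le> card (Lx - M0)" using cLx cM0 by simp
        then show ?thesis by (simp add: mult_left_mono)
      qed
      also have "\<dots> = (\<Sum>m\<in>Lx - M0. real k)" by simp
      also have "\<dots> \<le> (\<Sum>m\<in>Lx - M0. real (card (Bs T m)))"
        using big by (intro sum_mono) auto
      also have "\<dots> \<le> (\<Sum>m\<in>Lx. real (card (Bs T m)))"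
        using fLx by (intro sum_mono2) auto
      finally have "real k * real t \<le> (\<Sum>m\<in>Lx. real (card (Bs T m)))" .
      moreover have "q / s \<ge> 0" using q0 q_def by simp
      ultimately have "(q / s) * (real k * real t) \<le> (q / s) * (\<Sum>m\<in>Lx. real (card (Bs T m)))"
        by (rule mult_left_mono)
      then show ?thesis by (subst exp_le_cancel_iff) linarith
    qed
    finally show ?thesis .
  qed

  have Isub: "I \<subseteq> Sigma L (\<lambda>l. {T. T \<subseteq> l \<and> card T = k})" unfolding I_def by auto
  have fS: "finite (Sigma L (\<lambda>l. {T. T \<subseteq> l \<and> card T = k}))"
    using fL line_fin by (intro finite_SigmaI) auto
  have fI: "finite I" using Isub fS finite_subset by blast
  have cI: "card I \<le> card L * ((s+1) choose k)"
  proof -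
    have "card I \<le> card (Sigma L (\<lambda>l. {T. T \<subseteq> l \<and> card T = k}))" using Isub fS by (rule card_mono[rotated])
    also have "\<dots> = (\<Sum>l\<in>L. card {T. T \<subseteq> l \<and> card T = k})"
      using fL line_fin by (intro card_SigmaI) auto
    also have "\<dots> = (\<Sum>l\<in>L. (s+1) choose k)"
      by (intro sum.cong refl) (metis line_fin line_card n_subsets)
    finally show ?thesis by simp
  qed

  have "measure_pmf.prob (selection \<alpha> s t L x) (event_A P L s x)
        \<le> measure_pmf.prob (Pi_pmf Lx None D) (\<Union>i\<in>I. E (snd i))"
    unfolding sel using step1 by (intro measure_pmf.finite_measure_mono) auto
  also have "\<dots> \<le> (\<Sum>i\<in>I. measure_pmf.prob (Pi_pmf Lx None D) (E (snd i)))"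
    using fI by (intro measure_pmf.finite_measure_subadditive_finite) auto
  also have "\<dots> \<le> (\<Sum>i\<in>I. exp (- (q / s) * (real k * real t)))"
    using step2 by (intro sum_mono) auto
  also have "\<dots> = real (card I) * exp (- (q / s) * (real k * real t))" by simp
  also have "\<dots> \<le> real (card L * ((s+1) choose k)) * exp (- (q / s) * (real k * real t))"
    using cI by (intro mult_right_mono) (simp_all only: of_nat_le_iff exp_ge_zero)
  finally show ?thesis unfolding q_def .
qed

end

lemma q_bounds:
  fixes \<alpha> :: real and s t :: nat
  assumes a: "\<alpha> > 4" and y: "ln (real s) \<ge> 1 + 2 * \<alpha>" and s0: "s > 0"
    and t: "real t \<ge> real s * ln (real s) powr (2 * \<alpha>)"
  shows "0 \<le> ps_param \<alpha> s t \<and> ps_param \<alpha> s t \<le> 1 \<and> ln (real t) \<ge> ln (real s) + 2 * \<alpha> * ln (ln (real s))"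
proof -
  define S where "S = real s"
  define T where "T = real t"
  define y where "y = ln S"
  have S0: "S > 0" using s0 S_def by simp
  have y1: "y \<ge> 1" using y a y_def S_def by simp
  have yp: "y powr (2 * \<alpha>) \<ge> y ^ 2"
  proof -
    have "y powr 2 \<le> y powr (2 * \<alpha>)" using a y1 by (intro powr_mono) auto
    then show ?thesis using y1 by simp
  qed
  define t0 where "t0 = S * y powr (2 * \<alpha>)"
  have y2: "y ^ 2 \<ge> 1" using y1 by (simp add: one_le_power)
  have t0S: "t0 \<ge> S" using yp y2 S0 unfolding t0_def
    by (metis dual_order.trans mult.right_neutral mult_left_mono less_imp_le)
  have t00: "t0 > 0" using t0S S0 by simp
  have Tt0: "T \<ge> t0" using t unfolding T_def t0_def S_def y_def .
  have T0: "T > 0" using Tt0 t00 by simp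
  have lnt0: "ln t0 = y + 2 * \<alpha> * ln y"
    unfolding t0_def using S0 y1 by (subst ln_mult_pos) (auto simp: y_def)
  have lnT: "ln T \<ge> ln t0" using Tt0 t00 by simp
  have lny0: "ln y \<ge> 0" using y1 by simp
  have lnyy: "ln y \<le> y" using ln_le_minus_one[of y] y1 by simp
  have q0: "0 \<le> ps_param \<alpha> s t"
  proof -
    have "\<alpha> * ln y \<ge> 0" using lny0 a by simp
    moreover have "2 * \<alpha> * ln y = 2 * (\<alpha> * ln y)" by simp
    ultimately have "ln T - \<alpha> * ln y \<ge> 0" using lnT lnt0 y1 by linarith
    then have "S * (ln T - \<alpha> * ln y) \<ge> 0" using S0 by simp
    then show ?thesis unfolding ps_param_def using T0 S_def T_def y_def
      by (simp add: algebra_simps)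
  qed
  have key: "S * ln T \<le> T"
  proof -
    have "ln (T / t0) \<le> T / t0 - 1" using T0 t00 by (intro ln_le_minus_one) simp
    then have l1: "ln T \<le> ln t0 + (T - t0) / t0" using T0 t00 by (simp add: ln_divide_pos diff_divide_distrib)
    have "S * ((T - t0) / t0) = (S / t0) * (T - t0)" by simp
    also have "\<dots> \<le> 1 * (T - t0)" using t0S t00 S0 Tt0 by (intro mult_right_mono) auto
    finally have l2: "S * ((T - t0) / t0) \<le> T - t0" by simp
    have "S * ln t0 = S * (y + 2 * \<alpha> * ln y)" using lnt0 by simp
    also have "\<dots> \<le> S * (y * y)"
    proof -
      have "y + 2 * \<alpha> * ln y \<le> y + 2 * \<alpha> * y" using lnyy a by simp
      also have "\<dots> = (1 + 2 * \<alpha>) * y" by (simp add: algebra_simps)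
      also have "\<dots> \<le> y * y" using y y1 unfolding y_def S_def by (intro mult_right_mono) auto
      finally show ?thesis using S0 by simp
    qed
    also have "\<dots> \<le> t0" unfolding t0_def using yp S0 by (simp add: power2_eq_square)
    finally have l3: "S * ln t0 \<le> t0" .
    have "S * ln T \<le> S * (ln t0 + (T - t0) / t0)" using l1 S0 by simp
    also have "\<dots> = S * ln t0 + S * ((T - t0) / t0)" by (simp add: algebra_simps)
    finally show ?thesis using l2 l3 by simp
  qed
  have q1: "ps_param \<alpha> s t \<le> 1"
  proof -
    have "\<alpha> * S * ln y \<ge> 0" using a S0 lny0 by simp
    then have "S * ln T - \<alpha> * S * ln y \<le> T" using key by simp
    then show ?thesis unfolding ps_param_def using T0 S_def T_def y_def by simp
  qed
  show ?thesis using q0 q1 lnT lnt0 unfolding y_def S_def T_def by simp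
qed

lemma exp_form:
  fixes s t kr z :: real and k :: nat
  assumes "s > 0" "t > 0"
  shows "18 * s ^ 2 * t ^ 3 * (s + 1) ^ k * exp z = exp (ln 18 + 2 * ln s + 3 * ln t + real k * ln (s+1) + z)"
proof -
  have pos: "18 * s ^ 2 * t ^ 3 * (s + 1) ^ k > 0" using assms by simp
  have "ln (18 * s ^ 2 * t ^ 3 * (s + 1) ^ k) = ln 18 + 2 * ln s + 3 * ln t + real k * ln (s+1)"
    using assms by (simp add: ln_mult_pos ln_realpow)
  then have "18 * s ^ 2 * t ^ 3 * (s + 1) ^ k = exp (ln 18 + 2 * ln s + 3 * ln t + real k * ln (s+1))"
    using pos by (metis exp_ln)
  then show ?thesis by (simp add: exp_add)
qed

theorem mainTheorem3:
  fixes \<alpha> :: real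
  assumes "\<alpha> > 4"
  shows "\<forall>\<epsilon>>0. \<exists>S0::nat. \<forall>(s::nat) (t::nat) (P::'a set) L x.
           s \<ge> S0 \<and> gen_quadrangle P L s t \<and> locally_sparse P L s \<and>
           real t \<ge> real s * ln (real s) powr (2 * \<alpha>) \<and> x \<in> P \<longrightarrow>
           measure_pmf.prob (selection \<alpha> s t L x) (event_A P L s x) < \<epsilon>"
proof (intro allI impI)
  fix \<epsilon> :: real assume eps: "\<epsilon> > 0"
  define h where "h = (\<lambda>s::real. ln 18 + 5 * ln s + (ln s + 1) / s - 4 * (ln s - 6) * ln (ln s))"
  have hl: "filterlim (\<lambda>n. h (real n)) at_bot sequentially"
    unfolding h_def by (rule filterlim_compose[OF h_lim filterlim_real_sequentially])
  have ll: "filterlim (\<lambda>n. ln (real n)) at_top sequentially"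
    by (rule filterlim_compose[OF ln_at_top filterlim_real_sequentially])
  have ev1: "eventually (\<lambda>n. h (real n) \<le> ln \<epsilon> - 1) sequentially"
    using hl unfolding filterlim_at_bot by blast
  have ev2: "eventually (\<lambda>n. ln (real n) \<ge> max 6 (1 + 2 * \<alpha>)) sequentially"
    using ll unfolding filterlim_at_top by blast
  obtain S0 where S0: "\<And>n. n \<ge> S0 \<Longrightarrow> h (real n) \<le> ln \<epsilon> - 1 \<and> ln (real n) \<ge> max 6 (1 + 2 * \<alpha>)"
    using eventually_conj[OF ev1 ev2] unfolding eventually_sequentially by blast
  show "\<exists>S0::nat. \<forall>(s::nat) (t::nat) (P::'a set) L x.
           s \<ge> S0 \<and> gen_quadrangle P L s t \<and> locally_sparse P L s \<and>
           real t \<ge> real s * ln (real s) powr (2 * \<alpha>) \<and> x \<in> P \<longrightarrow>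
           measure_pmf.prob (selection \<alpha> s t L x) (event_A P L s x) < \<epsilon>"
  proof (intro exI allI impI, elim conjE)
    fix s t :: nat and P :: "'a set" and L x
    assume sS: "s \<ge> S0" and gq: "gen_quadrangle P L s t" and tb: "real t \<ge> real s * ln (real s) powr (2 * \<alpha>)"
      and xP: "x \<in> P"
    have hs: "h (real s) \<le> ln \<epsilon> - 1" and y: "ln (real s) \<ge> 6" "ln (real s) \<ge> 1 + 2 * \<alpha>"
      using S0[OF sS] by auto
    have s0: "s > 0" using y by (cases "s = 0") auto
    have t2: "t \<ge> 2" using gq_st[OF gq] by simp
    have qb: "0 \<le> ps_param \<alpha> s t" "ps_param \<alpha> s t \<le> 1"
      and lnt: "ln (real t) \<ge> ln (real s) + 2 * \<alpha> * ln (ln (real s))"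
      using q_bounds[OF assms y(2) s0 tb] by auto
    define k where "k = nat \<lceil>ln (real s)\<rceil>"
    have kr: "ln (real s) \<le> real k" "real k \<le> ln (real s) + 1"
      using y unfolding k_def by (auto intro: of_nat_ceiling) 
    define L2 where "L2 = ln (ln (real s))"
    have qe: "- (ps_param \<alpha> s t / s) * (real k * real t) = - (real k * (ln (real t) - \<alpha> * L2))"
      using s0 t2 unfolding ps_param_def L2_def by (simp add: field_simps)
    have cL: "real (card L) \<le> 18 * real s ^ 2 * real t ^ 3" using L_card_real[OF gq xP] by simp
    have cb: "real ((s+1) choose k) \<le> (real s + 1) ^ k"
    proof (cases "k \<le> s + 1")
      case True
      then have "(s+1) choose k \<le> (s+1) ^ k" by (rule binomial_le_pow)
      then have "real ((s+1) choose k) \<le> real ((s+1) ^ k)" by linarith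
      then show ?thesis by (simp add: add.commute)
    next
      case False
      then have z: "(s+1) choose k = 0" by (intro binomial_eq_0) simp
      show ?thesis unfolding z by simp
    qed
    have "measure_pmf.prob (selection \<alpha> s t L x) (event_A P L s x)
        \<le> real (card L * ((s+1) choose k)) * exp (- (ps_param \<alpha> s t / s) * (real k * real t))"
      using prob_bound[OF gq xP qb k_def] .
    also have "\<dots> = real (card L) * real ((s+1) choose k) * exp (- (real k * (ln (real t) - \<alpha> * L2)))"
      using qe by simp
    also have "\<dots> \<le> (18 * real s ^ 2 * real t ^ 3) * (real s + 1) ^ k * exp (- (real k * (ln (real t) - \<alpha> * L2)))"
      using cL cb by (intro mult_right_mono mult_mono) auto
    also have "\<dots> = exp (ln 18 + 2 * ln (real s) + 3 * ln (real t) + real k * ln (real s + 1) + - (real k * (ln (real t) - \<alpha> * L2)))"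
      using exp_form[of "real s" "real t" k] s0 t2 by simp
    also have "\<dots> \<le> exp (h (real s))"
    proof (subst exp_le_cancel_iff)
      have "ln 18 + 2 * ln (real s) + 3 * ln (real t) + real k * ln (real s + 1) - real k * ln (real t) + \<alpha> * real k * ln (ln (real s))
         \<le> ln 18 + 5 * ln (real s) + (ln (real s) + 1) / real s - 4 * (ln (real s) - 6) * ln (ln (real s))"
        by (rule analytic_ineq[OF assms y(1) _ lnt kr]) (use s0 in simp)
      then show "ln 18 + 2 * ln (real s) + 3 * ln (real t) + real k * ln (real s + 1) + - (real k * (ln (real t) - \<alpha> * L2)) \<le> h (real s)"
        unfolding h_def L2_def by (simp add: algebra_simps)
    qed
    also have "\<dots> \<le> exp (ln \<epsilon> - 1)" using hs by simp
    also have "\<dots> < exp (ln \<epsilon>)" by simp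
    also have "\<dots> = \<epsilon>" using eps by simp
    finally show "measure_pmf.prob (selection \<alpha> s t L x) (event_A P L s x) < \<epsilon>" .
  qed
qed

end
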